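(* Let $g\in\mathcal{H}(\mathbb{D})$ and let $L=L_1+g(0)P(g-g(0))\,\delta_0$, where \[ L_1=\sum_{k=1}^m\sum_{j=0}^k c_{j,k}S_g^jT_g^{k-j} \] is a $g$-operator of order $m\in\mathbb{N}$ and $P$ is a polynomial of degree less than $m$. Then there exists an increasing sequence $\{n_i\}_i$ in $\mathbb{N}$ such that $L[(g-g(0))^{n_i}]=P_i(g-g(0))$, where each $P_i$ is a polynomial of degree $m+n_i$.
   Context: $\mathcal{H}(\mathbb{D})$ is the space of analytic functions on the unit disc. For $g\in\mathcal{H}(\mathbb{D})$, operators on $\mathcal{H}(\mathbb{D})$: $M_gf=fg$, $T_gf(z)=\int_0^zf(\zeta)g'(\zeta)\,d\zeta$, $S_gf(z)=\int_0^zf'(\zeta)g(\zeta)\,d\zeta$, $\delta_0f=f(0)$; $h\,\delta_0$ denotes $f\mapsto f(0)h$; $S_g^0,T_g^0$ are the identity; $c_{j,k}\in\mathbb{C}$. A $g$-word with $m$ letters is a composition of $m$ operators from $\{M_g,S_g,T_g\}$; $\mathscr{A}_g^{(n)}$ is the linear span of $g$-words with at least one and at most $n$ letters; the order of a $g$-operator $L$ (element of the algebra generated by $M_g,S_g,T_g$) is the least $n\in\mathbb{N}$ with $L\in\mathscr{A}_g^{(n)}$. *)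

theory Defs
  imports "HOL-Complex_Analysis.Complex_Analysis" "HOL-Computational_Algebra.Polynomial"
begin

text \<open>Analytic functions on the unit disc are represented as functions
complex \<Rightarrow> complex that are holomorphic on ball 0 1; values outside the disc are
irrelevant.\<close>

definition M_op :: "(complex \<Rightarrow> complex) \<Rightarrow> (complex \<Rightarrow> complex) \<Rightarrow> (complex \<Rightarrow> complex)" where
  "M_op g f = (\<lambda>z. f z * g z)"

definition T_op :: "(complex \<Rightarrow> complex) \<Rightarrow> (complex \<Rightarrow> complex) \<Rightarrow> (complex \<Rightarrow> complex)" where
  "T_op g f = (\<lambda>z. contour_integral (linepath 0 z) (\<lambda>w. f w * deriv g w))"

definition S_op :: "(complex \<Rightarrow> complex) \<Rightarrow> (complex \<Rightarrow> complex) \<Rightarrow> (complex \<Rightarrow> complex)" where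
  "S_op g f = (\<lambda>z. contour_integral (linepath 0 z) (\<lambda>w. deriv f w * g w))"

datatype letter = LM | LS | LT

fun letter_op :: "(complex \<Rightarrow> complex) \<Rightarrow> letter \<Rightarrow> (complex \<Rightarrow> complex) \<Rightarrow> (complex \<Rightarrow> complex)" where
  "letter_op g LM = M_op g"
| "letter_op g LS = S_op g"
| "letter_op g LT = T_op g"

text \<open>A g-word: composition of the letters (first letter is applied last).\<close>
definition gword :: "(complex \<Rightarrow> complex) \<Rightarrow> letter list \<Rightarrow> (complex \<Rightarrow> complex) \<Rightarrow> (complex \<Rightarrow> complex)" where
  "gword g w = foldr (\<lambda>l h. letter_op g l \<circ> h) w id"

text \<open>The span of g-words with at least one and at most n letters, as operators on
H(D) (operator equality = equality on every analytic f, pointwise on the disc).\<close>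
definition g_span :: "(complex \<Rightarrow> complex) \<Rightarrow> nat \<Rightarrow>
    ((complex \<Rightarrow> complex) \<Rightarrow> (complex \<Rightarrow> complex)) set" where
  "g_span g n = {L. \<exists>ws :: letter list list. \<exists>c :: nat \<Rightarrow> complex.
     (\<forall>w\<in>set ws. 1 \<le> length w \<and> length w \<le> n) \<and>
     (\<forall>f. f holomorphic_on ball 0 1 \<longrightarrow>
        (\<forall>z\<in>ball 0 1. L f z = (\<Sum>i<length ws. c i * gword g (ws ! i) f z)))}"

definition g_order :: "(complex \<Rightarrow> complex) \<Rightarrow>
    ((complex \<Rightarrow> complex) \<Rightarrow> (complex \<Rightarrow> complex)) \<Rightarrow> nat" where
  "g_order g L = (LEAST n. L \<in> g_span g n)"

definition L1_op :: "(complex \<Rightarrow> complex) \<Rightarrow> (nat \<Rightarrow> nat \<Rightarrow> complex) \<Rightarrow> nat \<Rightarrow>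
    (complex \<Rightarrow> complex) \<Rightarrow> (complex \<Rightarrow> complex)" where
  "L1_op g c m f = (\<lambda>z. \<Sum>k=1..m. \<Sum>j=0..k. c j k * ((S_op g ^^ j) ((T_op g ^^ (k - j)) f)) z)"

end

theory Submission
  imports Defs
begin
definition pint :: "complex poly \<Rightarrow> complex poly" where
  "pint p = (\<Sum>i\<le>degree p. monom (coeff p i / of_nat (Suc i)) (Suc i))"

lemma coeff_pint: "coeff (pint p) n = (if n = 0 then 0 else coeff p (n-1) / of_nat n)"
proof (cases n)
  case 0 then show ?thesis by (simp add: pint_def coeff_sum coeff_monom)
next
  case (Suc k)
  have "coeff (pint p) n = (\<Sum>i\<le>degree p. if i = k then coeff p i / of_nat (Suc i) else 0)"
    by (simp add: pint_def coeff_sum coeff_monom Suc)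
  also have "\<dots> = (if k \<le> degree p then coeff p k / of_nat (Suc k) else 0)"
    by (simp add: sum.delta)
  also have "\<dots> = coeff p k / of_nat (Suc k)" using coeff_eq_0[of p k] by auto
  finally show ?thesis by (simp add: Suc)
qed

lemma pderiv_pint: "pderiv (pint p) = p"
  by (rule poly_eqI) (simp add: coeff_pderiv coeff_pint del: of_nat_Suc)

lemma pint_0: "poly (pint p) 0 = 0"
  by (simp add: poly_0_coeff_0 coeff_pint)

lemma degree_pint: "degree (pint p) \<le> degree p + 1"
  by (rule degree_le) (auto simp: coeff_pint coeff_eq_0)

lemma coeff_pint_Suc: "of_nat (Suc e) * coeff (pint p) (Suc e) = coeff p e"
  by (simp add: coeff_pint del: of_nat_Suc)

definition Sp :: "complex \<Rightarrow> complex poly \<Rightarrow> complex poly" where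
  "Sp a q = pint ([:a, 1:] * pderiv q)"

lemma degree_Sp: "degree (Sp a q) \<le> degree q + 1"
proof -
  have "degree ([:a, 1:] * pderiv q) \<le> degree q"
  proof (cases "pderiv q = 0")
    case True then show ?thesis by simp
  next
    case False
    then have "degree q \<ge> 1" using pderiv_eq_0_iff by fastforce
    then show ?thesis using degree_mult_le[of "[:a, 1:]" "pderiv q"] degree_pderiv[of q]
      by (simp split: if_splits)
  qed
  then show ?thesis unfolding Sp_def using degree_pint by (meson add_le_mono1 order_trans)
qed

lemma coeff_Sp_Suc:
  assumes "degree q \<le> e"
  shows "of_nat (Suc e) * coeff (Sp a q) (Suc e) = of_nat e * coeff q e"
proof -
  have "of_nat (Suc e) * coeff (Sp a q) (Suc e) = coeff ([:a, 1:] * pderiv q) e"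
    unfolding Sp_def by (rule coeff_pint_Suc)
  also have "\<dots> = a * coeff (pderiv q) e + (case e of 0 \<Rightarrow> 0 | Suc e' \<Rightarrow> coeff (pderiv q) e')"
    by (simp add: mult_pCons_left coeff_pCons split: nat.split)
  also have "\<dots> = of_nat e * coeff q e"
    using assms by (auto simp: coeff_pderiv coeff_eq_0 split: nat.split)
  finally show ?thesis .
qed


lemma degree_pint_iter: "degree ((pint ^^ i) p) \<le> degree p + i"
  by (induction i) (auto intro: order_trans[OF degree_pint])

lemma degree_Sp_iter: "degree ((Sp a ^^ i) p) \<le> degree p + i"
  by (induction i) (auto intro: order_trans[OF degree_Sp])

lemma tau: "pochhammer (of_nat n + 1) i * coeff ((pint ^^ i) (monom 1 n)) (n+i) = (1::complex)"
proof (induction i)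
  case 0 then show ?case by simp
next
  case (Suc i)
  have "of_nat (Suc (n+i)) * coeff (pint ((pint ^^ i) (monom 1 n))) (Suc (n+i))
        = coeff ((pint ^^ i) (monom 1 n)) (n+i)" by (rule coeff_pint_Suc)
  have "pochhammer (of_nat n + 1) (Suc i) * coeff ((pint ^^ Suc i) (monom 1 n)) (n + Suc i)
     = pochhammer (of_nat n + 1) i * (of_nat (Suc (n+i)) * coeff (pint ((pint ^^ i) (monom 1 n))) (Suc (n+i)))"
    by (simp add: pochhammer_Suc algebra_simps)
  also have "\<dots> = 1" using Suc.IH \<open>of_nat (Suc (n+i)) * _ = _\<close> by simp
  finally show ?case .
qed

lemma sigma:
  assumes "degree q \<le> d"
  shows "of_nat (d+j) * coeff ((Sp a ^^ j) q) (d+j) = of_nat d * coeff q d"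
proof (induction j)
  case 0 then show ?case by simp
next
  case (Suc j)
  have "degree ((Sp a ^^ j) q) \<le> d + j" using degree_Sp_iter[where a=a and i=j and p=q] assms by simp
  then have "of_nat (Suc (d+j)) * coeff (Sp a ((Sp a ^^ j) q)) (Suc (d+j))
        = of_nat (d+j) * coeff ((Sp a ^^ j) q) (d+j)" by (rule coeff_Sp_Suc)
  then show ?case using Suc.IH by simp
qed

lemma alpha:
  assumes "j \<le> m" "n \<ge> 1"
  shows "pochhammer (of_nat n + 1) m * coeff ((Sp a ^^ j) ((pint ^^ (m-j)) (monom 1 n))) (n+m)
         = pochhammer (of_nat (n+m-j) :: complex) j"
proof -
  define q where "q = (pint ^^ (m-j)) (monom 1 n)"
  define d where "d = n + (m - j)"
  have dq: "degree q \<le> d" unfolding q_def d_def using degree_pint_iter[where i="m-j" and p="monom (1::complex) n"]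
    by (simp add: degree_monom_eq)
  have nm: "n + m = d + j" using assms unfolding d_def by simp
  have s: "of_nat (n+m) * coeff ((Sp a ^^ j) q) (n+m) = of_nat d * coeff q d"
    using sigma[OF dq, where j=j and a=a] nm by simp
  have t: "pochhammer (of_nat n + 1) (m-j) * coeff q d = (1::complex)"
    using tau[of n "m-j"] unfolding q_def d_def .
  have split: "pochhammer (of_nat n + 1 :: complex) m
      = pochhammer (of_nat n + 1) (m-j) * pochhammer (of_nat d + 1) j"
    using pochhammer_product[of "m-j" m "of_nat n + 1 :: complex"] assms unfolding d_def
    by (simp add: algebra_simps)
  have pd: "of_nat d * pochhammer (of_nat d + 1) j = pochhammer (of_nat d :: complex) j * of_nat (n+m)"
    using pochhammer_rec[of "of_nat d :: complex" j] pochhammer_Suc[of "of_nat d :: complex" j] nm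
    by (simp add: algebra_simps)
  have "of_nat (n+m) * (pochhammer (of_nat n + 1) m * coeff ((Sp a ^^ j) q) (n+m))
       = pochhammer (of_nat n + 1) (m-j) * pochhammer (of_nat d + 1) j * (of_nat d * coeff q d)"
    using s split by (simp only: mult.assoc mult.left_commute[of "of_nat (n+m)"])
  also have "\<dots> = of_nat d * pochhammer (of_nat d + 1) j * (pochhammer (of_nat n + 1) (m-j) * coeff q d)"
    by (simp add: algebra_simps)
  also have "\<dots> = of_nat (n+m) * pochhammer (of_nat d) j" using t pd by simp
  finally have "pochhammer (of_nat n + 1) m * coeff ((Sp a ^^ j) q) (n+m) = pochhammer (of_nat d) j"
    using assms by (simp del: of_nat_add add: of_nat_add[symmetric])
  moreover have "d = n + m - j" using assms unfolding d_def by simp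
  ultimately show ?thesis unfolding q_def by simp
qed

lemma poly_pochhammer: "poly (pochhammer p j) x = pochhammer (poly p x) j"
  by (induction j) (simp_all add: pochhammer_Suc)

lemma pochhammer_lin_poly: "degree (pochhammer [:b, 1:] j) = j \<and> coeff (pochhammer [:b::complex, 1:] j) j = 1"
proof (induction j)
  case 0 then show ?case by simp
next
  case (Suc j)
  have eq: "pochhammer [:b, 1:] (Suc j) = pochhammer [:b, 1:] j * [:b + of_nat j, 1:]"
    by (simp add: pochhammer_Suc of_nat_poly)
  have nz: "pochhammer [:b, 1:] j \<noteq> 0" using Suc.IH by auto
  have "degree (pochhammer [:b, 1:] (Suc j)) = Suc j" unfolding eq
    using degree_mult_eq[OF nz, of "[:b + of_nat j, 1:]"] Suc.IH by simp
  moreover have "coeff (pochhammer [:b, 1:] (Suc j)) (Suc j) = 1"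
    using lead_coeff_mult[of "pochhammer [:b, 1:] j" "[:b + of_nat j, 1:]"] Suc.IH
      degree_mult_eq[OF nz, of "[:b + of_nat j, 1:]"] unfolding eq by simp
  ultimately show ?case by simp
qed

lemma prim_integral:
  assumes g: "g holomorphic_on ball 0 1" and z: "z \<in> ball 0 (1::real)"
    and h: "\<And>w. w \<in> ball 0 1 \<Longrightarrow> h w = poly p (g w - g 0) * deriv g w"
  shows "contour_integral (linepath 0 z) h = poly (pint p) (g z - g 0)"
proof -
  have d: "((\<lambda>w. poly (pint p) (g w - g 0)) has_field_derivative
            poly p (g w - g 0) * deriv g w) (at w within ball 0 1)" if "w \<in> ball 0 1" for w
  proof -
    have gd: "(g has_field_derivative deriv g w) (at w within ball 0 1)"
      using holomorphic_derivI[OF g open_ball that] .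
    have "((\<lambda>w. g w - g 0) has_field_derivative deriv g w) (at w within ball 0 1)"
      using gd by (auto intro!: derivative_eq_intros)
    from DERIV_chain2[OF poly_DERIV[of "pint p" "g w - g 0"] this]
    show ?thesis by (simp add: pderiv_pint)
  qed
  have seg: "path_image (linepath 0 z) \<subseteq> ball 0 1"
    using z by (simp add: closed_segment_subset convex_ball)
  have "((\<lambda>w. poly p (g w - g 0) * deriv g w) has_contour_integral
          (poly (pint p) (g z - g 0) - poly (pint p) (g 0 - g 0))) (linepath 0 z)"
    using contour_integral_primitive[OF d _ seg] by simp
  then have "((\<lambda>w. poly p (g w - g 0) * deriv g w) has_contour_integral
          poly (pint p) (g z - g 0)) (linepath 0 z)" by (simp add: pint_0)
  then have "(h has_contour_integral poly (pint p) (g z - g 0)) (linepath 0 z)"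
    by (rule has_contour_integral_eq) (use seg h in auto)
  then show ?thesis by (rule contour_integral_unique)
qed

lemma T_poly:
  assumes g: "g holomorphic_on ball 0 1" and z: "z \<in> ball 0 1"
    and f: "\<And>w. w \<in> ball 0 1 \<Longrightarrow> f w = poly p (g w - g 0)"
  shows "T_op g f z = poly (pint p) (g z - g 0)"
  unfolding T_op_def by (rule prim_integral[OF g z]) (simp add: f)

lemma S_poly:
  assumes g: "g holomorphic_on ball 0 1" and z: "z \<in> ball 0 1"
    and f: "\<And>w. w \<in> ball 0 1 \<Longrightarrow> f w = poly p (g w - g 0)"
  shows "S_op g f z = poly (Sp (g 0) p) (g z - g 0)"
  unfolding S_op_def Sp_def
proof (rule prim_integral[OF g z])
  fix w :: complex assume w: "w \<in> ball 0 1"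
  have gd: "(g has_field_derivative deriv g w) (at w)"
    using holomorphic_derivI[OF g open_ball w] .
  have "((\<lambda>w. g w - g 0) has_field_derivative deriv g w) (at w)"
    using gd by (auto intro!: derivative_eq_intros)
  from DERIV_chain2[OF poly_DERIV[of p "g w - g 0"] this]
  have "((\<lambda>w. poly p (g w - g 0)) has_field_derivative poly (pderiv p) (g w - g 0) * deriv g w) (at w)" .
  then have "(f has_field_derivative poly (pderiv p) (g w - g 0) * deriv g w) (at w)"
    by (rule has_field_derivative_transform_within_open[OF _ open_ball w]) (simp add: f)
  then have "deriv f w = poly (pderiv p) (g w - g 0) * deriv g w" by (rule DERIV_imp_deriv)
  then show "deriv f w * g w = poly ([:g 0, 1:] * pderiv p) (g w - g 0) * deriv g w"
    by (simp add: algebra_simps)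
qed

lemma T_iter:
  assumes g: "g holomorphic_on ball 0 1"
    and f: "\<And>w. w \<in> ball 0 1 \<Longrightarrow> f w = poly p (g w - g 0)"
  shows "\<forall>z\<in>ball 0 1. (T_op g ^^ i) f z = poly ((pint ^^ i) p) (g z - g 0)"
  by (induction i) (auto simp: f intro!: T_poly[OF g])

lemma S_iter:
  assumes g: "g holomorphic_on ball 0 1"
    and f: "\<And>w. w \<in> ball 0 1 \<Longrightarrow> f w = poly p (g w - g 0)"
  shows "\<forall>z\<in>ball 0 1. (S_op g ^^ i) f z = poly ((Sp (g 0) ^^ i) p) (g z - g 0)"
  by (induction i) (auto simp: f intro!: S_poly[OF g])

lemma ST_iter:
  assumes g: "g holomorphic_on ball 0 1" and z: "z \<in> ball 0 1"
  shows "(S_op g ^^ j) ((T_op g ^^ i) (\<lambda>w. (g w - g 0) ^ n)) z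
       = poly ((Sp (g 0) ^^ j) ((pint ^^ i) (monom 1 n))) (g z - g 0)"
  using S_iter[OF g, of "(T_op g ^^ i) (\<lambda>w. (g w - g 0) ^ n)" "(pint ^^ i) (monom 1 n)" j]
    T_iter[OF g, of "\<lambda>w. (g w - g 0) ^ n" "monom 1 n" i] z
  by (simp add: poly_monom)

lemma gword_rep: "gword g (replicate j l @ w) f = (letter_op g l ^^ j) (gword g w f)"
  by (induction j) (simp_all add: gword_def)

lemma gword_ST: "gword g (replicate j LS @ replicate i LT) f = (S_op g ^^ j) ((T_op g ^^ i) f)"
proof -
  have "gword g (replicate i LT) f = (T_op g ^^ i) f"
    using gword_rep[of g i LT "[]" f] by (simp add: gword_def)
  then show ?thesis by (simp add: gword_rep)
qed

lemma sum_list_concat_map: "sum_list (map F (concat xss)) = sum_list (map (\<lambda>xs. sum_list (map F xs)) xss)"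
  by (induction xss) simp_all

lemma lower_order:
  assumes "\<forall>j\<le>m. c j m = 0" "m \<ge> 1"
  shows "L1_op g c m \<in> g_span g (m - 1)"
proof -
  define ps where "ps = concat (map (\<lambda>k. map (\<lambda>j. (j,k)) [0..<Suc k]) [1..<m])"
  define ws where "ws = map (\<lambda>(j,k). replicate j LS @ replicate (k-j) LT) ps"
  define cc where "cc = (\<lambda>i. c (fst (ps!i)) (snd (ps!i)))"
  have len: "\<forall>w\<in>set ws. 1 \<le> length w \<and> length w \<le> m - 1"
    unfolding ws_def ps_def by auto
  have "L1_op g c m f z = (\<Sum>i<length ws. cc i * gword g (ws ! i) f z)" for f z
  proof -
    define F where "F = (\<lambda>(j,k). c j k * ((S_op g ^^ j) ((T_op g ^^ (k - j)) f)) z)"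
    have "(\<Sum>i<length ws. cc i * gword g (ws ! i) f z) = (\<Sum>i<length ps. F (ps ! i))"
      unfolding ws_def cc_def F_def by (auto simp: gword_ST split: prod.split intro!: sum.cong)
    also have "\<dots> = sum_list (map F ps)"
      by (simp add: sum_list_sum_nth atLeast0LessThan)
    also have "\<dots> = (\<Sum>k\<in>{1..<m}. \<Sum>j\<in>{0..<Suc k}. F (j,k))"
      unfolding ps_def sum_list_concat_map
      by (simp add: sum_set_upt_conv_sum_list_nat[symmetric] o_def)
    also have "\<dots> = (\<Sum>k=1..m. \<Sum>j=0..k. F (j,k))"
    proof -
      have "{1..m} = insert m {1..<m}" using assms(2) by auto
      moreover have "(\<Sum>j=0..m. F (j,m)) = 0" using assms(1) by (simp add: F_def)
      ultimately show ?thesis by (simp add: atLeastLessThanSuc_atLeastAtMost)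
    qed
    finally show ?thesis unfolding L1_op_def F_def by simp
  qed
  then show ?thesis unfolding g_span_def using len by blast
qed

lemma top_coeff_nonzero:
  assumes "g_order g (L1_op g c m) = m" "m \<ge> 1"
  shows "\<exists>j\<le>m. c j m \<noteq> 0"
proof (rule ccontr)
  assume "\<not> ?thesis"
  then have "L1_op g c m \<in> g_span g (m - 1)" using lower_order[OF _ assms(2)] by blast
  then have "g_order g (L1_op g c m) \<le> m - 1" unfolding g_order_def by (rule Least_le)
  then show False using assms by simp
qed

definition Rpoly :: "(nat \<Rightarrow> nat \<Rightarrow> complex) \<Rightarrow> nat \<Rightarrow> complex poly" where
  "Rpoly c m = (\<Sum>j\<le>m. smult (c j m) (pochhammer [:of_nat (m-j), 1:] j))"

lemma Rpoly_nz:
  assumes "\<exists>j\<le>m. c j m \<noteq> 0"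
  shows "Rpoly c m \<noteq> 0"
proof -
  define J where "J = Max {j. j \<le> m \<and> c j m \<noteq> 0}"
  have fin: "finite {j. j \<le> m \<and> c j m \<noteq> 0}" by simp
  have J: "J \<le> m" "c J m \<noteq> 0" using Max_in[OF fin] assms unfolding J_def by auto
  have big: "c j m = 0" if "j \<le> m" "j > J" for j
  proof (rule ccontr)
    assume "c j m \<noteq> 0"
    then have "j \<le> J" using Max_ge[OF fin, of j] that unfolding J_def by auto
    then show False using that by simp
  qed
  have "coeff (Rpoly c m) J = (\<Sum>j\<le>m. c j m * coeff (pochhammer [:of_nat (m-j), 1:] j) J)"
    by (simp add: Rpoly_def coeff_sum)
  also have "\<dots> = (\<Sum>j\<le>m. if j = J then c J m else 0)"
  proof (rule sum.cong)
    fix j assume j: "j \<in> {..m}"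
    show "c j m * coeff (pochhammer [:of_nat (m-j), 1:] j) J = (if j = J then c J m else 0)"
    proof (cases "j = J")
      case True then show ?thesis using pochhammer_lin_poly by simp
    next
      case False
      show ?thesis
      proof (cases "j < J")
        case True
        then have "coeff (pochhammer [:of_nat (m-j), 1:] j) J = (0::complex)"
          using pochhammer_lin_poly[of "of_nat (m-j)" j] by (simp add: coeff_eq_0)
        then show ?thesis using False by simp
      next
        case False2: False
        then show ?thesis using big[of j] j False by simp
      qed
    qed
  qed simp
  also have "\<dots> = c J m" using J by simp
  finally show ?thesis using J by auto
qed

lemma poly_Rpoly: "poly (Rpoly c m) (of_nat n) = (\<Sum>j\<le>m. c j m * pochhammer (of_nat (n+m-j)) j)"
  unfolding Rpoly_def poly_sum poly_smult poly_pochhammer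
proof (intro sum.cong refl)
  fix j assume "j \<in> {..m}"
  then have "m - j + n = n + m - j" by simp
  then have "(of_nat (m - j) + of_nat n :: complex) = of_nat (n + m - j)"
    by (simp only: of_nat_add[symmetric])
  then show "c j m * pochhammer (poly [:of_nat (m - j), 1:] (of_nat n)) j = c j m * pochhammer (of_nat (n + m - j)) j"
    by simp
qed

definition Qpoly :: "complex \<Rightarrow> (nat \<Rightarrow> nat \<Rightarrow> complex) \<Rightarrow> nat \<Rightarrow> nat \<Rightarrow> complex poly" where
  "Qpoly a c m n = (\<Sum>k=1..m. \<Sum>j=0..k. smult (c j k) ((Sp a ^^ j) ((pint ^^ (k-j)) (monom 1 n))))"

lemma degree_term: "j \<le> k \<Longrightarrow> degree ((Sp a ^^ j) ((pint ^^ (k-j)) (monom (1::complex) n))) \<le> n + k"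
  using degree_Sp_iter[where a=a and i=j and p="(pint ^^ (k-j)) (monom 1 n)"]
    degree_pint_iter[where i="k-j" and p="monom (1::complex) n"]
  by (simp add: degree_monom_eq)

lemma degree_Qpoly: "degree (Qpoly a c m n) \<le> n + m"
proof (rule degree_le, intro allI impI)
  fix i assume i: "n + m < i"
  show "coeff (Qpoly a c m n) i = 0"
    unfolding Qpoly_def coeff_sum coeff_smult
    by (rule sum.neutral, intro ballI, rule sum.neutral, intro ballI)
       (use i in \<open>auto intro!: coeff_eq_0 le_less_trans[OF degree_term]\<close>)
qed

lemma coeff_Qpoly:
  assumes "n \<ge> 1" "m \<ge> 1"
  shows "pochhammer (of_nat n + 1) m * coeff (Qpoly a c m n) (n + m) = poly (Rpoly c m) (of_nat n)"
proof -
  have low: "(\<Sum>j=0..k. c j k * coeff ((Sp a ^^ j) ((pint ^^ (k-j)) (monom 1 n))) (n + m)) = 0"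
    if "k < m" for k
    using that by (auto intro!: sum.neutral coeff_eq_0 le_less_trans[OF degree_term])
  have "{1..m} = insert m {1..<m}" using assms(2) by auto
  then have "coeff (Qpoly a c m n) (n + m)
      = (\<Sum>j=0..m. c j m * coeff ((Sp a ^^ j) ((pint ^^ (m-j)) (monom 1 n))) (n + m))"
    unfolding Qpoly_def coeff_sum coeff_smult using low by simp
  then have "pochhammer (of_nat n + 1) m * coeff (Qpoly a c m n) (n + m)
      = (\<Sum>j=0..m. c j m * (pochhammer (of_nat n + 1) m * coeff ((Sp a ^^ j) ((pint ^^ (m-j)) (monom 1 n))) (n + m)))"
    by (simp add: sum_distrib_left algebra_simps)
  also have "\<dots> = (\<Sum>j=0..m. c j m * pochhammer (of_nat (n+m-j)) j)"
    using alpha assms by (intro sum.cong) auto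
  finally show ?thesis by (simp add: poly_Rpoly atLeast0AtMost)
qed

lemma L1_Qpoly:
  assumes g: "g holomorphic_on ball 0 1" and z: "z \<in> ball 0 1"
  shows "L1_op g c m (\<lambda>w. (g w - g 0) ^ n) z = poly (Qpoly (g 0) c m n) (g z - g 0)"
  unfolding L1_op_def Qpoly_def by (simp add: poly_sum ST_iter[OF g z])

theorem proposition3p7:
  fixes g :: "complex \<Rightarrow> complex" and c :: "nat \<Rightarrow> nat \<Rightarrow> complex"
    and m :: nat and P :: "complex poly"
  assumes "g holomorphic_on ball 0 1"
    and "m \<ge> 1"
    and "g_order g (L1_op g c m) = m"
    and "degree P < m"
  shows "\<exists>n :: nat \<Rightarrow> nat. strict_mono n \<and>
           (\<forall>i. \<exists>Pi :: complex poly. degree Pi = m + n i \<and>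
              (\<forall>z\<in>ball 0 1.
                 L1_op g c m (\<lambda>w. (g w - g 0) ^ n i) z
                 + g 0 * poly P (g z - g 0) * (g 0 - g 0) ^ n i
                 = poly Pi (g z - g 0)))"
proof -
  have Rnz: "Rpoly c m \<noteq> 0" using Rpoly_nz top_coeff_nonzero[OF assms(3,2)] by blast
  define A where "A = {n::nat. 1 \<le> n \<and> poly (Rpoly c m) (of_nat n) \<noteq> 0}"
  have fin: "finite (of_nat -` {x. poly (Rpoly c m) x = 0} :: nat set)"
    by (rule finite_vimageI[OF poly_roots_finite[OF Rnz]]) (simp add: inj_on_def)
  have "A = UNIV - ({0} \<union> of_nat -` {x. poly (Rpoly c m) x = 0})"
    unfolding A_def by auto
  then have infA: "infinite A" using fin by (simp add: Diff_infinite_finite)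
  define n where "n = enumerate A"
  have sm: "strict_mono n" unfolding n_def by (rule strict_mono_enumerate[OF infA])
  have nA: "n i \<in> A" for i unfolding n_def by (rule enumerate_in_set[OF infA])
  have "\<forall>i. \<exists>Pi :: complex poly. degree Pi = m + n i \<and>
              (\<forall>z\<in>ball 0 1.
                 L1_op g c m (\<lambda>w. (g w - g 0) ^ n i) z
                 + g 0 * poly P (g z - g 0) * (g 0 - g 0) ^ n i
                 = poly Pi (g z - g 0))"
  proof
    fix i
    have n1: "n i \<ge> 1" and Rn: "poly (Rpoly c m) (of_nat (n i)) \<noteq> 0" using nA[of i] unfolding A_def by auto
    have "pochhammer (of_nat (n i) + 1) m * coeff (Qpoly (g 0) c m (n i)) (n i + m) \<noteq> 0"
      using coeff_Qpoly[OF n1 assms(2)] Rn by simp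
    then have "coeff (Qpoly (g 0) c m (n i)) (n i + m) \<noteq> 0" by auto
    then have "n i + m \<le> degree (Qpoly (g 0) c m (n i))" by (rule le_degree)
    then have deg: "degree (Qpoly (g 0) c m (n i)) = m + n i"
      using degree_Qpoly[of "g 0" c m "n i"] by simp
    show "\<exists>Pi :: complex poly. degree Pi = m + n i \<and>
              (\<forall>z\<in>ball 0 1.
                 L1_op g c m (\<lambda>w. (g w - g 0) ^ n i) z
                 + g 0 * poly P (g z - g 0) * (g 0 - g 0) ^ n i
                 = poly Pi (g z - g 0))"
      using deg n1 L1_Qpoly[OF assms(1)] by (intro exI[of _ "Qpoly (g 0) c m (n i)"]) auto
  qed
  then show ?thesis using sm by blast
qed

end
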